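(* Let $p\ge 1$, $N\ge 1$, let $x_1,\dots,x_N\in\mathbb{R}^p$ be arbitrary, and let $w_1,\dots,w_N>0$ be fixed weights. Let $f:\mathbb{R}^p\to[0,1]$ be PDD. Define the blurring mean-shift iteration by $x_i^{(0)}=x_i$ and $$x_i^{(t+1)}=\frac{\sum_{j=1}^N f(x_i^{(t)}-x_j^{(t)})\,w_j\,x_j^{(t)}}{\sum_{j=1}^N f(x_i^{(t)}-x_j^{(t)})\,w_j},\qquad i=1,\dots,N,\ t\ge 0.$$ Then there exist points $x_1^*,\dots,x_N^*\in\mathbb{R}^p$ such that $\lim_{t\to\infty}x_i^{(t)}=x_i^*$ for every $i=1,\dots,N$.
   Context: A function $f:\mathbb{R}^p\to[0,1]$ is called PDD (positive and decreasing with respect to distance) if: (i) $0\le f(u)\le 1$ for all $u$, and $f(u)=1$ if and only if $u=0$; (ii) $f(u)$ depends only on $\|u\|$, i.e. $f(u)=\varphi(\|u\|)$ for some function $\varphi:[0,\infty)\to[0,1]$; (iii) $\varphi$ is decreasing (non-increasing) in $\|u\|$. The denominators in the iteration are positive since $f(0)=1$ and $w_i>0$. *)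

theory Defs
  imports "HOL-Analysis.Analysis"
begin

text \<open>PDD: positive and decreasing with respect to distance.\<close>
definition PDD :: "(real^'p \<Rightarrow> real) \<Rightarrow> bool" where
  "PDD f \<longleftrightarrow>
     (\<forall>u. 0 \<le> f u \<and> f u \<le> 1) \<and>
     (\<forall>u. f u = 1 \<longleftrightarrow> u = 0) \<and>
     (\<exists>\<phi> :: real \<Rightarrow> real.
        (\<forall>u. f u = \<phi> (norm u)) \<and>
        (\<forall>a b. 0 \<le> a \<longrightarrow> a \<le> b \<longrightarrow> \<phi> b \<le> \<phi> a))"

primrec bms :: "(real^'p \<Rightarrow> real) \<Rightarrow> (nat \<Rightarrow> real) \<Rightarrow> nat \<Rightarrow> (nat \<Rightarrow> real^'p)
                 \<Rightarrow> nat \<Rightarrow> nat \<Rightarrow> real^'p" where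
  "bms f w N x 0 = x"
| "bms f w N x (Suc t) =
     (\<lambda>i. inverse (\<Sum>j<N. f (bms f w N x t i - bms f w N x t j) * w j) *\<^sub>R
          (\<Sum>j<N. (f (bms f w N x t i - bms f w N x t j) * w j) *\<^sub>R bms f w N x t j))"

end

theory Submission
  imports Defs
begin

lemma dec_integrable:
  fixes g :: "real \<Rightarrow> real"
  assumes mono: "\<And>a b. 0 \<le> a \<Longrightarrow> a \<le> b \<Longrightarrow> g b \<le> g a" and "0 \<le> c"
  shows "g integrable_on {c..d}"
proof -
  have "mono_on {c..d} (\<lambda>x. - g x)"
    using mono assms(2) by (auto simp: mono_on_def)
  then have "(\<lambda>x. - g x) integrable_on {c..d}" by (rule integrable_on_mono_on)
  then have "(\<lambda>x. - (- g x)) integrable_on {c..d}" by (rule integrable_neg)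
  then show ?thesis by simp
qed

lemma supergrad:
  fixes g :: "real \<Rightarrow> real"
  assumes mono: "\<And>a b. 0 \<le> a \<Longrightarrow> a \<le> b \<Longrightarrow> g b \<le> g a" and s: "0 \<le> s" and s': "0 \<le> s'"
  shows "integral {0..s'} g \<le> integral {0..s} g + g s * (s' - s)"
proof (cases "s \<le> s'")
  case True
  have "integral {0..s} g + integral {s..s'} g = integral {0..s'} g"
    using True s by (intro Henstock_Kurzweil_Integration.integral_combine dec_integrable[OF mono]) auto
  moreover have "integral {s..s'} g \<le> integral {s..s'} (\<lambda>_. g s)"
    using s by (intro integral_le dec_integrable[OF mono]) (auto intro: mono)
  ultimately show ?thesis using True by (simp add: algebra_simps)
next
  case False
  have "integral {0..s'} g + integral {s'..s} g = integral {0..s} g"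
    using False s' dec_integrable[OF mono, where c=0 and d=s] by (intro Henstock_Kurzweil_Integration.integral_combine) auto
  moreover have "integral {s'..s} (\<lambda>_. g s) \<le> integral {s'..s} g"
  proof (rule integral_le)
    show "g integrable_on {s'..s}" using s' by (intro dec_integrable[OF mono]) auto
  qed (use s s' False in \<open>auto intro: mono\<close>)
  ultimately show ?thesis using False by (simp add: algebra_simps)
qed

lemma integral_nonneg_dec:
  fixes g :: "real \<Rightarrow> real"
  assumes mono: "\<And>a b. 0 \<le> a \<Longrightarrow> a \<le> b \<Longrightarrow> g b \<le> g a" and "\<And>a. 0 \<le> a \<Longrightarrow> 0 \<le> g a"
  shows "0 \<le> integral {0..s} g"
  using assms by (intro integral_nonneg dec_integrable[OF mono]) auto


locale bmsl =
  fixes f :: "real^'p \<Rightarrow> real" and w :: "nat \<Rightarrow> real" and N :: nat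
    and x :: "nat \<Rightarrow> real^'p" and \<phi> :: "real \<Rightarrow> real"
  assumes N1: "N \<ge> 1" and wpos: "\<And>j. j < N \<Longrightarrow> w j > 0"
    and f01: "\<And>u. 0 \<le> f u \<and> f u \<le> 1" and f1: "\<And>u. f u = 1 \<longleftrightarrow> u = 0"
    and f\<phi>: "\<And>u. f u = \<phi> (norm u)"
    and \<phi>mono: "\<And>a b. 0 \<le> a \<Longrightarrow> a \<le> b \<Longrightarrow> \<phi> b \<le> \<phi> a"
begin

definition "X t i = bms f w N x t i"
definition "F t i j = f (X t i - X t j)"
definition "S t i = (\<Sum>j<N. F t i j * w j)"
definition "a t i j = F t i j * w j / S t i"
definition "Wt = (\<Sum>j<N. w j)"
definition "wmin = Min (w ` {..<N})"

lemma \<phi>_range: assumes "0 \<le> r" shows "0 \<le> \<phi> r" "\<phi> r \<le> 1"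
proof -
  have "\<phi> r = f (r *\<^sub>R axis undefined 1)" using assms by (simp add: f\<phi>)
  then show "0 \<le> \<phi> r" "\<phi> r \<le> 1" using f01 by auto
qed

lemma \<phi>0: "\<phi> 0 = 1" using f1[of 0] f\<phi>[of 0] by simp

lemma wmin_pos: "wmin > 0"
  unfolding wmin_def using N1 wpos by (subst Min_gr_iff) (auto simp: lessThan_empty_iff)

lemma wmin_le: "j < N \<Longrightarrow> wmin \<le> w j"
  unfolding wmin_def by (rule Min_le) auto

lemma w_nonneg: "j < N \<Longrightarrow> 0 \<le> w j" using wpos by (simp add: less_imp_le)

lemma Wt_ge: "j < N \<Longrightarrow> w j \<le> Wt"
  unfolding Wt_def using wpos by (intro member_le_sum) (auto intro: less_imp_le)

lemma Wt_pos: "Wt > 0" using Wt_ge[of 0] wpos[of 0] N1 by auto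

lemma F01: "0 \<le> F t i j" "F t i j \<le> 1" unfolding F_def using f01 by auto
lemma Fii: "F t i i = 1" unfolding F_def using f1 by simp
lemma Fsym: "F t i j = F t j i"
  unfolding F_def f\<phi> by (simp add: norm_minus_commute)

lemma S_ge: "i < N \<Longrightarrow> w i \<le> S t i"
proof -
  assume i: "i < N"
  have "F t i i * w i \<le> S t i" unfolding S_def
    using i by (intro member_le_sum) (auto intro!: mult_nonneg_nonneg F01 w_nonneg)
  then show ?thesis by (simp add: Fii)
qed

lemma S_pos: "i < N \<Longrightarrow> S t i > 0" using S_ge wpos by (meson less_le_trans)

lemma S_le: "S t i \<le> Wt"
  unfolding S_def Wt_def using F01 wpos
  by (intro sum_mono) (auto intro: mult_left_le_one_le less_imp_le)

lemma a_nonneg: "j < N \<Longrightarrow> 0 \<le> a t i j"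
  unfolding a_def S_def
  by (auto intro!: divide_nonneg_nonneg sum_nonneg mult_nonneg_nonneg F01 w_nonneg)

lemma a_sum: "i < N \<Longrightarrow> (\<Sum>j<N. a t i j) = 1"
  unfolding a_def using S_pos[of i t] by (simp add: sum_divide_distrib[symmetric] S_def)

lemma X0: "X 0 i = x i" unfolding X_def by simp

lemma X_Suc: "X (Suc t) i = (\<Sum>j<N. a t i j *\<^sub>R X t j)"
  unfolding X_def a_def F_def S_def
  by (simp add: scaleR_sum_right divide_inverse mult.commute)

end

lemma quad_identity:
  fixes B :: "nat \<Rightarrow> nat \<Rightarrow> real" and y z :: "nat \<Rightarrow> 'a::real_inner"
  assumes sym: "\<And>i j. i<N \<Longrightarrow> j<N \<Longrightarrow> B i j = B j i"
    and key: "\<And>i. i<N \<Longrightarrow> (\<Sum>j<N. B i j *\<^sub>R (y i - y j - z i)) = 0"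
  shows "(\<Sum>i<N. \<Sum>j<N. B i j * (norm (y i - y j))^2)
       - (\<Sum>i<N. \<Sum>j<N. B i j * (norm ((y i - z i) - (y j - z j)))^2)
       = (\<Sum>i<N. \<Sum>j<N. B i j * (norm (z i + z j))^2)"
proof -
  define p where "p i j = inner (y i - y j - z i) (z i)" for i j
  have pw: "(norm (y i - y j))^2 - (norm ((y i - z i) - (y j - z j)))^2 - (norm (z i + z j))^2
        = 2 * p i j + 2 * p j i" for i j
    unfolding p_def by (simp add: power2_norm_eq_inner inner_simps algebra_simps inner_commute)
  have s1: "(\<Sum>i<N. \<Sum>j<N. B i j * p i j) = 0"
  proof -
    have "(\<Sum>i<N. \<Sum>j<N. B i j * p i j) = (\<Sum>i<N. inner (\<Sum>j<N. B i j *\<^sub>R (y i - y j - z i)) (z i))"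
      unfolding p_def by (simp add: inner_sum_left)
    also have "\<dots> = 0" using key by simp
    finally show ?thesis .
  qed
  have s2: "(\<Sum>i<N. \<Sum>j<N. B i j * p j i) = (\<Sum>i<N. \<Sum>j<N. B i j * p i j)"
  proof -
    have "(\<Sum>i<N. \<Sum>j<N. B i j * p j i) = (\<Sum>i<N. \<Sum>j<N. B j i * p j i)"
      using sym by (intro sum.cong refl) auto
    also have "\<dots> = (\<Sum>i<N. \<Sum>j<N. B i j * p i j)" by (rule sum.swap)
    finally show ?thesis .
  qed
  have "(\<Sum>i<N. \<Sum>j<N. B i j * (norm (y i - y j))^2)
       - (\<Sum>i<N. \<Sum>j<N. B i j * (norm ((y i - z i) - (y j - z j)))^2)
       - (\<Sum>i<N. \<Sum>j<N. B i j * (norm (z i + z j))^2)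
     = (\<Sum>i<N. \<Sum>j<N. B i j * ((norm (y i - y j))^2 - (norm ((y i - z i) - (y j - z j)))^2 - (norm (z i + z j))^2))"
    by (simp add: right_diff_distrib sum_subtractf)
  also have "\<dots> = (\<Sum>i<N. \<Sum>j<N. 2 * (B i j * p i j) + 2 * (B i j * p j i))"
    by (simp only: pw) (simp add: algebra_simps)
  also have "\<dots> = 0" by (simp add: sum.distrib sum_distrib_left[symmetric] s1 s2)
  finally show ?thesis by simp
qed

context bmsl begin

definition "B t i j = w i * w j * F t i j"
definition "Z t i = X t i - X (Suc t) i"
definition "h s = integral {0..s} (\<lambda>u. \<phi> (sqrt u))"
definition "G t = (\<Sum>i<N. \<Sum>j<N. w i * w j * h ((norm (X t i - X t j))^2))"

lemma B_sym: "B t i j = B t j i" unfolding B_def by (simp add: Fsym mult.commute)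
lemma B_nonneg: "i<N \<Longrightarrow> j<N \<Longrightarrow> 0 \<le> B t i j"
  unfolding B_def by (intro mult_nonneg_nonneg w_nonneg F01) auto

lemma B_key: assumes i: "i < N"
  shows "(\<Sum>j<N. B t i j *\<^sub>R (X t i - X t j - Z t i)) = 0"
proof -
  have "(\<Sum>j<N. B t i j *\<^sub>R (X t i - X t j - Z t i)) = (\<Sum>j<N. B t i j *\<^sub>R (X (Suc t) i - X t j))"
    unfolding Z_def by simp
  also have "\<dots> = (\<Sum>j<N. B t i j) *\<^sub>R X (Suc t) i - (\<Sum>j<N. B t i j *\<^sub>R X t j)"
    by (simp add: scaleR_diff_right sum_subtractf scaleR_sum_left)
  also have "(\<Sum>j<N. B t i j) = w i * S t i"
    unfolding B_def S_def by (simp add: sum_distrib_left mult_ac)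
  also have "(\<Sum>j<N. B t i j *\<^sub>R X t j) = (w i * S t i) *\<^sub>R X (Suc t) i"
  proof -
    have "(w i * S t i) *\<^sub>R X (Suc t) i = (\<Sum>j<N. (w i * S t i * a t i j) *\<^sub>R X t j)"
      by (simp add: X_Suc scaleR_sum_right)
    also have "\<dots> = (\<Sum>j<N. B t i j *\<^sub>R X t j)"
      using S_pos[OF i, of t] unfolding a_def B_def by (intro sum.cong refl) (simp add: field_simps)
    finally show ?thesis by simp
  qed
  finally show ?thesis by simp
qed

lemma h_super: assumes "0 \<le> s" "0 \<le> s'" shows "h s' \<le> h s + \<phi> (sqrt s) * (s' - s)"
  unfolding h_def by (rule supergrad) (use assms in \<open>auto intro: \<phi>mono\<close>)

lemma h_nonneg: "0 \<le> h s"
  unfolding h_def by (rule integral_nonneg_dec) (auto intro: \<phi>mono \<phi>_range)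

lemma G_nonneg: "0 \<le> G t"
  unfolding G_def by (auto intro!: sum_nonneg mult_nonneg_nonneg w_nonneg h_nonneg)

lemma G_dec: "G (Suc t) \<le> G t - 4 * (\<Sum>i<N. (w i)^2 * (norm (Z t i))^2)"
proof -
  let ?d = "\<lambda>t i j. (norm (X t i - X t j))^2"
  have "G (Suc t) \<le> (\<Sum>i<N. \<Sum>j<N. w i * w j * (h (?d t i j) + F t i j * (?d (Suc t) i j - ?d t i j)))"
    unfolding G_def
  proof (intro sum_mono mult_left_mono)
    fix i j assume "i \<in> {..<N}" "j \<in> {..<N}"
    have "\<phi> (sqrt (?d t i j)) = F t i j" by (simp add: F_def f\<phi>)
    then show "h (?d (Suc t) i j) \<le> h (?d t i j) + F t i j * (?d (Suc t) i j - ?d t i j)"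
      using h_super[of "?d t i j" "?d (Suc t) i j"] by simp
    show "0 \<le> w i * w j" using \<open>i \<in> _\<close> \<open>j \<in> _\<close> by (auto intro!: mult_nonneg_nonneg w_nonneg)
  qed
  also have "\<dots> = G t - ((\<Sum>i<N. \<Sum>j<N. B t i j * ?d t i j) - (\<Sum>i<N. \<Sum>j<N. B t i j * ?d (Suc t) i j))"
    unfolding G_def B_def by (simp add: sum.distrib sum_subtractf algebra_simps)
  also have "(\<Sum>i<N. \<Sum>j<N. B t i j * ?d t i j) - (\<Sum>i<N. \<Sum>j<N. B t i j * ?d (Suc t) i j)
      = (\<Sum>i<N. \<Sum>j<N. B t i j * (norm (Z t i + Z t j))^2)"
  proof -
    have "X (Suc t) k = X t k - Z t k" for k by (simp add: Z_def)
    then show ?thesis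
      using quad_identity[of N "B t" "X t" "Z t"] B_sym B_key by simp
  qed
  finally have 1: "G (Suc t) \<le> G t - (\<Sum>i<N. \<Sum>j<N. B t i j * (norm (Z t i + Z t j))^2)" .
  have 2: "(\<Sum>i<N. \<Sum>j<N. B t i j * (norm (Z t i + Z t j))^2) \<ge> (\<Sum>i<N. B t i i * (norm (Z t i + Z t i))^2)"
    by (intro sum_mono member_le_sum) (auto intro!: mult_nonneg_nonneg B_nonneg)
  have "(\<Sum>i<N. B t i i * (norm (Z t i + Z t i))^2) = 4 * (\<Sum>i<N. (w i)^2 * (norm (Z t i))^2)"
  proof -
    have "norm (Z t i + Z t i) = 2 * norm (Z t i)" for i
      by (metis mult_2 norm_scaleR real_norm_def scaleR_2 abs_numeral)
    then show ?thesis by (simp add: B_def Fii sum_distrib_left power2_eq_square algebra_simps)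
  qed
  with 1 2 show ?thesis by simp
qed

end

context bmsl begin

definition "E t = (\<Sum>i<N. (w i)^2 * (norm (Z t i))^2)"
definition "R = Max (norm ` x ` {..<N})"

lemma E_nonneg: "0 \<le> E t" unfolding E_def by (auto intro!: sum_nonneg)

lemma G_bound: "G t + 4 * (\<Sum>k<t. E k) \<le> G 0"
proof (induction t)
  case (Suc t)
  then show ?case using G_dec[of t] unfolding E_def by simp
qed simp

lemma E_summable: "summable E"
proof (rule summableI_nonneg_bounded[where x = "G 0 / 4"])
  fix n show "(\<Sum>k<n. E k) \<le> G 0 / 4" using G_bound[of n] G_nonneg[of n] by simp
qed (rule E_nonneg)

lemma Z_tendsto: assumes i: "i < N" shows "(\<lambda>t. norm (Z t i)) \<longlonglongrightarrow> 0"
proof -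
  have E0: "E \<longlonglongrightarrow> 0" by (rule summable_LIMSEQ_zero[OF E_summable])
  have "(w i)^2 * (norm (Z t i))^2 \<le> E t" for t
    unfolding E_def using i by (intro member_le_sum) auto
  then have le: "(norm (Z t i))^2 \<le> E t / (w i)^2" for t
    using wpos[OF i] by (simp add: field_simps)
  have "(\<lambda>t. (norm (Z t i))^2) \<longlonglongrightarrow> 0"
    by (rule Lim_null_comparison[where g="\<lambda>t. E t / (w i)^2"])
       (use le E0 in \<open>auto intro: tendsto_divide_zero\<close>)
  then have "(\<lambda>t. sqrt ((norm (Z t i))^2)) \<longlonglongrightarrow> sqrt 0" by (intro tendsto_intros)
  then show ?thesis by simp
qed

lemma R_nonneg: "0 \<le> R"
  unfolding R_def using N1 by (subst Max_ge_iff) (auto simp: lessThan_empty_iff)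

lemma X_bound: "i < N \<Longrightarrow> norm (X t i) \<le> R"
proof (induction t arbitrary: i)
  case 0
  then show ?case unfolding X0 R_def by (intro Max_ge) auto
next
  case (Suc t)
  have "norm (X (Suc t) i) \<le> (\<Sum>j<N. norm (a t i j *\<^sub>R X t j))"
    unfolding X_Suc by (rule norm_sum)
  also have "\<dots> \<le> (\<Sum>j<N. a t i j * R)"
    using Suc.IH a_nonneg by (intro sum_mono) (auto intro: mult_left_mono)
  also have "\<dots> = R" using a_sum[OF Suc.prems] by (simp add: sum_distrib_right[symmetric])
  finally show ?case .
qed

definition "Q t = (\<Sum>i<N. \<Sum>j<N. B t i j * (norm (X t i - X t j))^2)"

lemma Q_formula: "Q t = 2 * (\<Sum>i<N. (w i * S t i) * inner (Z t i) (X t i))"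
proof -
  define q where "q i j = B t i j * inner (X t i - X t j) (X t i)" for i j
  have pw: "B t i j * (norm (X t i - X t j))^2 = q i j + q j i" for i j
    unfolding q_def by (simp add: power2_norm_eq_inner inner_simps B_sym[of t j i] algebra_simps inner_commute)
  have sw: "(\<Sum>i<N. \<Sum>j<N. q j i) = (\<Sum>i<N. \<Sum>j<N. q i j)" by (rule sum.swap)
  have "Q t = 2 * (\<Sum>i<N. \<Sum>j<N. q i j)"
    unfolding Q_def pw by (simp add: sum.distrib sw)
  also have "(\<Sum>i<N. \<Sum>j<N. q i j) = (\<Sum>i<N. inner (\<Sum>j<N. B t i j *\<^sub>R (X t i - X t j)) (X t i))"
    unfolding q_def by (simp add: inner_sum_left)
  also have "\<dots> = (\<Sum>i<N. (w i * S t i) * inner (Z t i) (X t i))"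
  proof (intro sum.cong refl)
    fix i assume i: "i \<in> {..<N}"
    have "(\<Sum>j<N. B t i j *\<^sub>R (X t i - X t j)) = (\<Sum>j<N. B t i j *\<^sub>R (X t i - X t j - Z t i)) + (\<Sum>j<N. B t i j) *\<^sub>R Z t i"
      by (simp add: scaleR_diff_right sum_subtractf scaleR_sum_left)
    also have "\<dots> = (w i * S t i) *\<^sub>R Z t i"
      using B_key[of i t] i unfolding B_def S_def by (simp add: sum_distrib_left mult_ac)
    finally show "inner (\<Sum>j<N. B t i j *\<^sub>R (X t i - X t j)) (X t i) = (w i * S t i) * inner (Z t i) (X t i)"
      by simp
  qed
  finally show ?thesis .
qed

lemma Q_tendsto: "Q \<longlonglongrightarrow> 0"
proof (rule Lim_null_comparison[where g="\<lambda>t. 2 * (\<Sum>i<N. (Wt * Wt * R) * norm (Z t i))"])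
  show "\<forall>\<^sub>F t in sequentially. norm (Q t) \<le> 2 * (\<Sum>i<N. (Wt * Wt * R) * norm (Z t i))"
  proof (intro always_eventually allI)
    fix t
    have "norm (Q t) = 2 * norm (\<Sum>i<N. (w i * S t i) * inner (Z t i) (X t i))"
      by (simp add: Q_formula)
    also have "\<dots> \<le> 2 * (\<Sum>i<N. norm ((w i * S t i) * inner (Z t i) (X t i)))"
      by (intro mult_left_mono norm_sum) auto
    also have "\<dots> \<le> 2 * (\<Sum>i<N. (Wt * Wt * R) * norm (Z t i))"
    proof (intro mult_left_mono sum_mono)
      fix i assume i: "i \<in> {..<N}"
      have ws: "0 \<le> w i * S t i" "w i * S t i \<le> Wt * Wt"
        using i S_pos[of i t] w_nonneg[of i] Wt_ge[of i] S_le[of t i]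
        by (auto intro: mult_mono)
      have "norm ((w i * S t i) * inner (Z t i) (X t i)) = (w i * S t i) * \<bar>inner (Z t i) (X t i)\<bar>"
        using ws i w_nonneg[of i] S_pos[of i t] by (simp add: abs_mult)
      also have "\<dots> \<le> (Wt * Wt) * (norm (Z t i) * R)"
      proof (rule mult_mono)
        show "\<bar>inner (Z t i) (X t i)\<bar> \<le> norm (Z t i) * R"
          using X_bound[of i t] i Cauchy_Schwarz_ineq2[of "Z t i" "X t i"]
          by (metis lessThan_iff mult_left_mono norm_ge_zero order.trans)
      qed (use ws in auto)
      finally show "norm ((w i * S t i) * inner (Z t i) (X t i)) \<le> (Wt * Wt * R) * norm (Z t i)"
        by (simp add: mult_ac)
    qed auto
    finally show "norm (Q t) \<le> 2 * (\<Sum>i<N. (Wt * Wt * R) * norm (Z t i))" .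
  qed
  have "(\<lambda>t. 2 * (\<Sum>i<N. (Wt * Wt * R) * norm (Z t i))) \<longlonglongrightarrow> 2 * (\<Sum>i<N. (Wt * Wt * R) * 0)"
    by (intro tendsto_intros Z_tendsto) auto
  then show "(\<lambda>t. 2 * (\<Sum>i<N. (Wt * Wt * R) * norm (Z t i))) \<longlonglongrightarrow> 0" by simp
qed

lemma psi_tendsto: assumes i: "i < N" and j: "j < N"
  shows "(\<lambda>t. F t i j * (norm (X t i - X t j))^2) \<longlonglongrightarrow> 0"
proof (rule Lim_null_comparison[where g="\<lambda>t. Q t / (wmin * wmin)"])
  show "\<forall>\<^sub>F t in sequentially. norm (F t i j * (norm (X t i - X t j))^2) \<le> Q t / (wmin * wmin)"
  proof (intro always_eventually allI)
    fix t
    have "B t i j * (norm (X t i - X t j))^2 \<le> (\<Sum>j<N. B t i j * (norm (X t i - X t j))^2)"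
      using j by (intro member_le_sum) (auto intro!: mult_nonneg_nonneg B_nonneg i)
    also have "\<dots> \<le> Q t" unfolding Q_def using i
      by (intro member_le_sum[of i]) (auto intro!: sum_nonneg mult_nonneg_nonneg B_nonneg)
    finally have 1: "B t i j * (norm (X t i - X t j))^2 \<le> Q t" .
    have "(wmin * wmin) * (F t i j * (norm (X t i - X t j))^2) \<le> B t i j * (norm (X t i - X t j))^2"
    proof -
      have "wmin * wmin \<le> w i * w j"
        using wmin_le[OF i] wmin_le[OF j] wmin_pos by (intro mult_mono) auto
      then have "(wmin * wmin) * (F t i j * (norm (X t i - X t j))^2) \<le> (w i * w j) * (F t i j * (norm (X t i - X t j))^2)"
        using F01[of t i j] by (intro mult_right_mono) auto
      then show ?thesis by (simp add: B_def mult_ac)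
    qed
    with 1 have "(wmin * wmin) * (F t i j * (norm (X t i - X t j))^2) \<le> Q t" by simp
    then show "norm (F t i j * (norm (X t i - X t j))^2) \<le> Q t / (wmin * wmin)"
      using wmin_pos F01[of t i j] by (simp add: field_simps)
  qed
  show "(\<lambda>t. Q t / (wmin * wmin)) \<longlonglongrightarrow> 0"
    using tendsto_divide_zero[OF Q_tendsto] by simp
qed

end

context bmsl begin

lemma F_eq_if_same: "X t i = X t j \<Longrightarrow> F t i k = F t j k" unfolding F_def by simp

lemma same_Suc: assumes "X t i = X t j" shows "X (Suc t) i = X (Suc t) j"
proof -
  have "S t i = S t j" unfolding S_def using F_eq_if_same[OF assms] by simp
  then show ?thesis unfolding X_Suc a_def using F_eq_if_same[OF assms] by simp
qed

lemma same_forever: assumes "X t i = X t j" shows "X (t + k) i = X (t + k) j"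
  using assms by (induction k) (auto intro: same_Suc)

lemma caseA: assumes A: "\<And>u. u \<noteq> 0 \<Longrightarrow> f u = 0" and i: "i < N" shows "X t i = x i"
proof (induction t)
  case 0 then show ?case by (simp add: X0)
next
  case (Suc t)
  have "X (Suc t) i = (\<Sum>j<N. a t i j *\<^sub>R X t i)"
    unfolding X_Suc
  proof (intro sum.cong refl)
    fix j assume "j \<in> {..<N}"
    show "a t i j *\<^sub>R X t j = a t i j *\<^sub>R X t i"
    proof (cases "X t i = X t j")
      case False
      then have "F t i j = 0" unfolding F_def using A by simp
      then show ?thesis by (simp add: a_def)
    qed simp
  qed
  also have "\<dots> = X t i" using a_sum[OF i] by (simp add: scaleR_sum_left[symmetric])
  finally show ?case using Suc by simp
qed

definition "dd t i j = norm (X t i - X t j)"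

lemma dd_step: "\<bar>dd (Suc t) i j - dd t i j\<bar> \<le> norm (Z t i) + norm (Z t j)"
proof -
  have "X (Suc t) i - X (Suc t) j = (X t i - X t j) - (Z t i - Z t j)" unfolding Z_def by simp
  then have "\<bar>dd (Suc t) i j - dd t i j\<bar> \<le> norm (Z t i - Z t j)"
    unfolding dd_def using norm_triangle_ineq3[of "(X t i - X t j) - (Z t i - Z t j)" "X t i - X t j"]
    by (simp add: norm_minus_commute)
  also have "\<dots> \<le> norm (Z t i) + norm (Z t j)" by (rule norm_triangle_ineq4)
  finally show ?thesis .
qed

lemma dd_step_tendsto: assumes "i < N" "j < N"
  shows "(\<lambda>t. \<bar>dd (Suc t) i j - dd t i j\<bar>) \<longlonglongrightarrow> 0"
proof (rule Lim_null_comparison[where g="\<lambda>t. norm (Z t i) + norm (Z t j)"])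
  show "\<forall>\<^sub>F t in sequentially. norm \<bar>dd (Suc t) i j - dd t i j\<bar> \<le> norm (Z t i) + norm (Z t j)"
    using dd_step by auto
  show "(\<lambda>t. norm (Z t i) + norm (Z t j)) \<longlonglongrightarrow> 0"
    using tendsto_add[OF Z_tendsto[OF assms(1)] Z_tendsto[OF assms(2)]] by simp
qed

definition "close i j \<longleftrightarrow> (\<lambda>t. dd t i j) \<longlonglongrightarrow> 0"

lemma dd_nonneg: "0 \<le> dd t i j" unfolding dd_def by simp
lemma dd_sym: "dd t i j = dd t j i" unfolding dd_def by (simp add: norm_minus_commute)
lemma dd_tri: "dd t i l \<le> dd t i j + dd t j l" unfolding dd_def using norm_triangle_ineq[of "X t i - X t j" "X t j - X t l"] by simp

lemma close_refl: "close i i" unfolding close_def dd_def by simp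
lemma close_sym: "close i j \<Longrightarrow> close j i" unfolding close_def using dd_sym by simp
lemma close_trans: assumes "close i j" "close j l" shows "close i l"
  unfolding close_def
proof (rule Lim_null_comparison[where g="\<lambda>t. dd t i j + dd t j l"])
  show "\<forall>\<^sub>F t in sequentially. norm (dd t i l) \<le> dd t i j + dd t j l"
    using dd_tri dd_nonneg by auto
  show "(\<lambda>t. dd t i j + dd t j l) \<longlonglongrightarrow> 0"
    using tendsto_add[OF assms[unfolded close_def]] by simp
qed

lemma F_dd: "F t i j = \<phi> (dd t i j)" unfolding F_def dd_def f\<phi> ..

end

locale bmsB = bmsl +
  fixes r1 \<kappa> :: real
  assumes r1pos: "r1 > 0" and \<kappa>pos: "\<kappa> > 0" and f\<kappa>: "\<And>u. norm u \<le> r1 \<Longrightarrow> \<kappa> \<le> f u"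
begin

lemma F\<kappa>: "dd t i j \<le> r1 \<Longrightarrow> \<kappa> \<le> F t i j" unfolding F_def dd_def by (rule f\<kappa>)

lemma \<kappa>le1: "\<kappa> \<le> 1" using f\<kappa>[of 0] f01[of 0] r1pos by simp

lemma dichotomy: assumes i: "i < N" and j: "j < N" and nc: "\<not> close i j"
  shows "(\<lambda>t. F t i j) \<longlonglongrightarrow> 0"
proof -
  obtain \<epsilon> where \<epsilon>: "\<epsilon> > 0" and freq: "\<And>T. \<exists>t\<ge>T. dd t i j \<ge> \<epsilon>"
  proof -
    have "\<exists>\<epsilon>>0. \<forall>T. \<exists>t\<ge>T. dd t i j \<ge> \<epsilon>"
    proof (rule ccontr)
      assume "\<not> ?thesis"
      then have H: "\<forall>\<epsilon>>0. \<exists>T. \<forall>t\<ge>T. dd t i j < \<epsilon>" by (meson not_le)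
      have "(\<lambda>t. dd t i j) \<longlonglongrightarrow> 0"
      proof (rule LIMSEQ_I)
        fix r :: real assume "0 < r"
        then obtain T where "\<forall>t\<ge>T. dd t i j < r" using H by blast
        then show "\<exists>no. \<forall>n\<ge>no. norm (dd n i j - 0) < r" using dd_nonneg by auto
      qed
      with nc show False by (simp add: close_def)
    qed
    then show ?thesis using that by blast
  qed
  define \<eta> where "\<eta> = min \<epsilon> r1 / 2"
  have \<eta>: "\<eta> > 0" "\<eta> < \<epsilon>" "\<eta> \<le> r1" using \<epsilon> r1pos by (auto simp: \<eta>_def)
  have psi: "(\<lambda>t. F t i j * (dd t i j)^2) \<longlonglongrightarrow> 0" using psi_tendsto[OF i j] by (simp add: dd_def)
  have ev1: "\<forall>\<^sub>F t in sequentially. F t i j * (dd t i j)^2 < \<kappa> * (\<eta>/2)^2"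
    using order_tendstoD(2)[OF psi, of "\<kappa> * (\<eta>/2)^2"] \<kappa>pos \<eta> by simp
  have ev2: "\<forall>\<^sub>F t in sequentially. \<bar>dd (Suc t) i j - dd t i j\<bar> < \<eta>/2"
    using order_tendstoD(2)[OF dd_step_tendsto[OF i j], of "\<eta>/2"] \<eta> by simp
  obtain T where T: "\<And>t. t \<ge> T \<Longrightarrow> F t i j * (dd t i j)^2 < \<kappa> * (\<eta>/2)^2 \<and> \<bar>dd (Suc t) i j - dd t i j\<bar> < \<eta>/2"
    using eventually_conj[OF ev1 ev2] unfolding eventually_sequentially by blast
  have band: "\<not> (\<eta>/2 \<le> dd t i j \<and> dd t i j \<le> \<eta>)" if "t \<ge> T" for t
  proof
    assume b: "\<eta>/2 \<le> dd t i j \<and> dd t i j \<le> \<eta>"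
    then have "\<kappa> \<le> F t i j" using F\<kappa> \<eta> by auto
    moreover have "(\<eta>/2)^2 \<le> (dd t i j)^2" using b \<eta> by (intro power_mono) auto
    ultimately have "\<kappa> * (\<eta>/2)^2 \<le> F t i j * (dd t i j)^2"
      using \<kappa>pos by (intro mult_mono) auto
    with T[OF that] show False by simp
  qed
  obtain t0 where t0: "t0 \<ge> T" "dd t0 i j \<ge> \<epsilon>" using freq by blast
  have big: "dd (t0 + k) i j > \<eta>" for k
  proof (induction k)
    case 0 then show ?case using t0 \<eta> by simp
  next
    case (Suc k)
    have "dd (Suc (t0 + k)) i j > \<eta>/2" 
    proof -
      have "\<bar>dd (Suc (t0 + k)) i j - dd (t0 + k) i j\<bar> < \<eta>/2" using T[of "t0 + k"] t0 by auto
      then show ?thesis using Suc by linarith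
    qed
    then show ?case using band[of "Suc (t0 + k)"] t0 by auto
  qed
  show ?thesis
  proof (rule Lim_null_comparison[where g="\<lambda>t. F t i j * (dd t i j)^2 / \<eta>^2"])
    show "\<forall>\<^sub>F t in sequentially. norm (F t i j) \<le> F t i j * (dd t i j)^2 / \<eta>^2"
      unfolding eventually_sequentially
    proof (intro exI allI impI)
      fix t assume "t0 \<le> t"
      then have "dd t i j > \<eta>" using big[of "t - t0"] by simp
      then have "\<eta>^2 \<le> (dd t i j)^2" using \<eta> by (intro power_mono) auto
      then have "F t i j * \<eta>^2 \<le> F t i j * (dd t i j)^2" using F01 by (intro mult_left_mono) auto
      then show "norm (F t i j) \<le> F t i j * (dd t i j)^2 / \<eta>^2"
        using \<eta> F01[of t i j] by (simp add: field_simps)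
    qed
    show "(\<lambda>t. F t i j * (dd t i j)^2 / \<eta>^2) \<longlonglongrightarrow> 0"
      using tendsto_divide_zero[OF psi] by simp
  qed
qed

end

context bmsB begin

definition "\<phi>0 = (SUP r\<in>{0<..}. \<phi> r)"

lemma \<phi>0_props: "bdd_above (\<phi> ` {0<..})" "\<And>r. r > 0 \<Longrightarrow> \<phi> r \<le> \<phi>0"
proof -
  show b: "bdd_above (\<phi> ` {0<..})" by (rule bdd_aboveI[of _ 1]) (auto intro: \<phi>_range)
  fix r :: real assume "r > 0" then show "\<phi> r \<le> \<phi>0" unfolding \<phi>0_def by (intro cSUP_upper b) auto
qed

lemma \<phi>_tendsto0: assumes d: "d \<longlonglongrightarrow> 0" and pos: "\<And>t. d t > 0"
  shows "(\<lambda>t. \<phi> (d t)) \<longlonglongrightarrow> \<phi>0"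
proof (rule order_tendstoI)
  fix y assume "y < \<phi>0"
  then obtain r where r: "r > 0" "y < \<phi> r"
    unfolding \<phi>0_def using less_cSUP_iff[OF _ \<phi>0_props(1)] by force
  have "\<forall>\<^sub>F t in sequentially. d t < r" using order_tendstoD(2)[OF d r(1)] .
  then show "\<forall>\<^sub>F t in sequentially. y < \<phi> (d t)"
    by eventually_elim (use r pos \<phi>mono in \<open>smt (verit)\<close>)
next
  fix y assume "\<phi>0 < y"
  then show "\<forall>\<^sub>F t in sequentially. \<phi> (d t) < y"
    using \<phi>0_props(2)[OF pos] by (intro always_eventually allI) (auto intro: le_less_trans)
qed

definition "Fl i j = (if close i j then (if \<exists>t. dd t i j = 0 then 1 else \<phi>0) else 0)"

lemma F_lim: assumes i: "i < N" and j: "j < N" shows "(\<lambda>t. F t i j) \<longlonglongrightarrow> Fl i j"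
proof (cases "close i j")
  case False
  then show ?thesis using dichotomy[OF i j] by (simp add: Fl_def)
next
  case True
  show ?thesis
  proof (cases "\<exists>t. dd t i j = 0")
    case True
    then obtain t0 where "dd t0 i j = 0" by blast
    then have "X t0 i = X t0 j" by (simp add: dd_def)
    then have "\<forall>\<^sub>F t in sequentially. F t i j = 1"
      unfolding eventually_sequentially
    proof (intro exI allI impI)
      fix t assume "X t0 i = X t0 j" "t0 \<le> t"
      then have "X t i = X t j" using same_forever[of t0 i j "t - t0"] by simp
      then show "F t i j = 1" by (simp add: F_def f1)
    qed
    then have "(\<lambda>t. F t i j) \<longlonglongrightarrow> 1" by (rule tendsto_eventually)
    then show ?thesis using True \<open>close i j\<close> by (simp add: Fl_def)
  next
    case False
    then have pos: "\<And>t. dd t i j > 0" using dd_nonneg by (metis less_eq_real_def)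
    have "(\<lambda>t. \<phi> (dd t i j)) \<longlonglongrightarrow> \<phi>0"
      using \<phi>_tendsto0[of "\<lambda>t. dd t i j"] \<open>close i j\<close> pos by (simp add: close_def)
    then show ?thesis using False \<open>close i j\<close> by (simp add: Fl_def F_dd)
  qed
qed

definition "Sl i = (\<Sum>j<N. Fl i j * w j)"

lemma S_lim: "i < N \<Longrightarrow> (\<lambda>t. S t i) \<longlonglongrightarrow> Sl i"
  unfolding S_def Sl_def by (intro tendsto_sum tendsto_mult F_lim tendsto_const) auto

lemma Sl_ge: assumes "i < N" shows "w i \<le> Sl i"
  using S_lim[OF assms] S_ge[OF assms] by (intro LIMSEQ_le_const) auto

lemma Sl_pos: "i < N \<Longrightarrow> Sl i > 0" using Sl_ge wpos by (meson less_le_trans)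

definition "rho t i = Sl i / S t i"

lemma rho_lim: assumes "i < N" shows "(\<lambda>t. rho t i) \<longlonglongrightarrow> 1"
proof -
  have "(\<lambda>t. Sl i / S t i) \<longlonglongrightarrow> Sl i / Sl i"
    using Sl_pos[OF assms] by (intro tendsto_intros S_lim assms) auto
  then show ?thesis using Sl_pos[OF assms] by (simp add: rho_def)
qed

definition "theta t = (\<Sum>i<N. \<bar>rho t i - 1\<bar>)"

lemma theta_lim: "theta \<longlonglongrightarrow> 0"
proof -
  have "(\<lambda>t. \<Sum>i<N. \<bar>rho t i - 1\<bar>) \<longlonglongrightarrow> (\<Sum>i<N. \<bar>1 - 1\<bar>)"
    by (intro tendsto_intros rho_lim) auto
  then show ?thesis by (simp add: theta_def[abs_def])
qed

lemma theta_ge: "i < N \<Longrightarrow> \<bar>rho t i - 1\<bar> \<le> theta t"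
  unfolding theta_def by (intro member_le_sum) auto

end

lemma conv_sq:
  fixes c :: "nat \<Rightarrow> real" and y :: "nat \<Rightarrow> 'a::real_inner"
  assumes "(\<Sum>j<N. c j) = 1"
  shows "(norm (\<Sum>j<N. c j *\<^sub>R y j))^2 = (\<Sum>j<N. c j * (norm (y j))^2)
           - (1/2) * (\<Sum>j<N. \<Sum>l<N. c j * c l * (norm (y j - y l))^2)"
proof -
  have e1: "(norm (\<Sum>j<N. c j *\<^sub>R y j))^2 = (\<Sum>j<N. \<Sum>l<N. c j * c l * inner (y j) (y l))"
    by (simp add: power2_norm_eq_inner inner_sum_left inner_sum_right sum_distrib_left)
       (subst sum.swap, simp add: mult_ac)
  have e2: "(\<Sum>j<N. \<Sum>l<N. c j * c l * (norm (y j))^2) = (\<Sum>j<N. c j * (norm (y j))^2)"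
    by (simp add: sum_distrib_left[symmetric] sum_distrib_right[symmetric] assms mult_ac)
  have e3: "(\<Sum>j<N. \<Sum>l<N. c j * c l * (norm (y l))^2) = (\<Sum>j<N. c j * (norm (y j))^2)"
    using e2 by (subst sum.swap) (simp add: mult_ac)
  have "(\<Sum>j<N. \<Sum>l<N. c j * c l * (norm (y j - y l))^2)
      = (\<Sum>j<N. \<Sum>l<N. c j * c l * (norm (y j))^2 + c j * c l * (norm (y l))^2 - 2 * (c j * c l * inner (y j) (y l)))"
    by (intro sum.cong refl) (simp add: power2_norm_eq_inner inner_simps inner_commute algebra_simps)
  also have "\<dots> = 2 * (\<Sum>j<N. c j * (norm (y j))^2) - 2 * (norm (\<Sum>j<N. c j *\<^sub>R y j))^2"
    by (simp only: sum.distrib sum_subtractf e1 e2 e3 sum_distrib_left[symmetric])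
  finally show ?thesis by linarith
qed

lemma dsum_ge_row:
  fixes g :: "nat \<Rightarrow> nat \<Rightarrow> real"
  assumes i: "i < N" and nn: "\<And>j l. j < N \<Longrightarrow> l < N \<Longrightarrow> 0 \<le> g j l"
    and sym: "\<And>j l. g j l = g l j" and z: "g i i = 0"
  shows "2 * (\<Sum>l<N. g i l) \<le> (\<Sum>j<N. \<Sum>l<N. g j l)"
proof -
  have split: "(\<Sum>j<N. \<Sum>l<N. g j l) = (\<Sum>l<N. g i l) + (\<Sum>j\<in>{..<N}-{i}. \<Sum>l<N. g j l)"
    using i by (subst sum.remove[of _ i]) auto
  have "(\<Sum>j\<in>{..<N}-{i}. g j i) \<le> (\<Sum>j\<in>{..<N}-{i}. \<Sum>l<N. g j l)"
    using i nn by (intro sum_mono member_le_sum) auto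
  moreover have "(\<Sum>j\<in>{..<N}-{i}. g j i) = (\<Sum>l<N. g i l)"
  proof -
    have "(\<Sum>l<N. g i l) = g i i + (\<Sum>j\<in>{..<N}-{i}. g i j)" using i by (subst sum.remove[of _ i]) auto
    then show ?thesis using z sym by simp
  qed
  ultimately show ?thesis using split by simp
qed

lemma dob:
  fixes \<alpha> \<beta> :: "nat \<Rightarrow> real" and y :: "nat \<Rightarrow> 'a::real_normed_vector"
  assumes a0: "\<And>j. j < N \<Longrightarrow> 0 \<le> \<alpha> j" and b0: "\<And>j. j < N \<Longrightarrow> 0 \<le> \<beta> j"
    and eq: "(\<Sum>j<N. \<alpha> j) = (\<Sum>j<N. \<beta> j)"
    and inP: "\<And>j l. j < N \<Longrightarrow> l < N \<Longrightarrow> P j \<Longrightarrow> P l \<Longrightarrow> norm (y j - y l) \<le> c"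
    and all: "\<And>j l. j < N \<Longrightarrow> l < N \<Longrightarrow> norm (y j - y l) \<le> D"
    and c0: "0 \<le> c" and D0: "0 \<le> D"
  shows "norm ((\<Sum>j<N. \<alpha> j *\<^sub>R y j) - (\<Sum>j<N. \<beta> j *\<^sub>R y j))
         \<le> c * (\<Sum>j<N. \<alpha> j) + D * ((\<Sum>j<N. if P j then 0 else \<alpha> j) + (\<Sum>j<N. if P j then 0 else \<beta> j))"
proof -
  define M where "M = (\<Sum>j<N. \<alpha> j)"
  have M0: "0 \<le> M" unfolding M_def using a0 by (auto intro: sum_nonneg)
  define nA where "nA = (\<Sum>j<N. if P j then 0 else \<alpha> j)"
  define nB where "nB = (\<Sum>j<N. if P j then 0 else \<beta> j)"
  have nA0: "0 \<le> nA" "0 \<le> nB" unfolding nA_def nB_def using a0 b0 by (auto intro!: sum_nonneg)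
  have key: "M *\<^sub>R ((\<Sum>j<N. \<alpha> j *\<^sub>R y j) - (\<Sum>j<N. \<beta> j *\<^sub>R y j))
      = (\<Sum>j<N. \<Sum>l<N. (\<alpha> j * \<beta> l) *\<^sub>R (y j - y l))"
  proof -
    have "(\<Sum>j<N. \<Sum>l<N. (\<alpha> j * \<beta> l) *\<^sub>R (y j - y l))
        = (\<Sum>j<N. \<Sum>l<N. (\<alpha> j * \<beta> l) *\<^sub>R y j) - (\<Sum>j<N. \<Sum>l<N. (\<alpha> j * \<beta> l) *\<^sub>R y l)"
      by (simp add: scaleR_diff_right sum_subtractf)
    also have "(\<Sum>j<N. \<Sum>l<N. (\<alpha> j * \<beta> l) *\<^sub>R y j) = M *\<^sub>R (\<Sum>j<N. \<alpha> j *\<^sub>R y j)"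
    proof -
      have "(\<Sum>l<N. (\<alpha> j * \<beta> l) *\<^sub>R y j) = M *\<^sub>R (\<alpha> j *\<^sub>R y j)" for j
      proof -
        have "(\<Sum>l<N. (\<alpha> j * \<beta> l) *\<^sub>R y j) = (\<Sum>l<N. \<alpha> j * \<beta> l) *\<^sub>R y j"
          by (rule scaleR_sum_left[symmetric])
        also have "(\<Sum>l<N. \<alpha> j * \<beta> l) = \<alpha> j * M" unfolding M_def eq by (rule sum_distrib_left[symmetric])
        finally show ?thesis by simp
      qed
      then show ?thesis by (simp add: scaleR_sum_right)
    qed
    also have "(\<Sum>j<N. \<Sum>l<N. (\<alpha> j * \<beta> l) *\<^sub>R y l) = M *\<^sub>R (\<Sum>j<N. \<beta> j *\<^sub>R y j)"
    proof -
      have "(\<Sum>j<N. (\<alpha> j * \<beta> l) *\<^sub>R y l) = M *\<^sub>R (\<beta> l *\<^sub>R y l)" for l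
      proof -
        have "(\<Sum>j<N. (\<alpha> j * \<beta> l) *\<^sub>R y l) = (\<Sum>j<N. \<alpha> j * \<beta> l) *\<^sub>R y l"
          by (rule scaleR_sum_left[symmetric])
        also have "(\<Sum>j<N. \<alpha> j * \<beta> l) = M * \<beta> l" unfolding M_def by (rule sum_distrib_right[symmetric])
        finally show ?thesis by simp
      qed
      then show ?thesis by (subst sum.swap) (simp add: scaleR_sum_right)
    qed
    finally show ?thesis by (simp add: scaleR_diff_right)
  qed
  have bnd: "norm (y j - y l) \<le> c + D * ((if P j then 0 else 1) + (if P l then 0 else 1))"
    if "j < N" "l < N" for j l
  proof (cases "P j \<and> P l")
    case True then show ?thesis using inP[OF that] by simp
  next
    case False
    then have "1 \<le> (if P j then 0 else 1) + (if P l then (0::real) else 1)" by auto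
    then have "D \<le> D * ((if P j then 0 else 1) + (if P l then 0 else 1))"
      using D0 by (metis mult_left_mono mult.right_neutral)
    then show ?thesis using all[OF that] c0 by linarith
  qed
  have "M * norm ((\<Sum>j<N. \<alpha> j *\<^sub>R y j) - (\<Sum>j<N. \<beta> j *\<^sub>R y j))
      \<le> (\<Sum>j<N. \<Sum>l<N. (\<alpha> j * \<beta> l) * (c + D * ((if P j then 0 else 1) + (if P l then 0 else 1))))"
  proof -
    have "M * norm ((\<Sum>j<N. \<alpha> j *\<^sub>R y j) - (\<Sum>j<N. \<beta> j *\<^sub>R y j))
        = norm (\<Sum>j<N. \<Sum>l<N. (\<alpha> j * \<beta> l) *\<^sub>R (y j - y l))"
    proof -
      have "M * norm ((\<Sum>j<N. \<alpha> j *\<^sub>R y j) - (\<Sum>j<N. \<beta> j *\<^sub>R y j))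
          = norm (M *\<^sub>R ((\<Sum>j<N. \<alpha> j *\<^sub>R y j) - (\<Sum>j<N. \<beta> j *\<^sub>R y j)))"
        using M0 by simp
      then show ?thesis by (simp only: key)
    qed
    also have "\<dots> \<le> (\<Sum>j<N. norm (\<Sum>l<N. (\<alpha> j * \<beta> l) *\<^sub>R (y j - y l)))" by (rule norm_sum)
    also have "\<dots> \<le> (\<Sum>j<N. \<Sum>l<N. norm ((\<alpha> j * \<beta> l) *\<^sub>R (y j - y l)))" by (intro sum_mono norm_sum)
    also have "\<dots> \<le> (\<Sum>j<N. \<Sum>l<N. (\<alpha> j * \<beta> l) * (c + D * ((if P j then 0 else 1) + (if P l then 0 else 1))))"
    proof (intro sum_mono)
      fix j l assume "j \<in> {..<N}" "l \<in> {..<N}"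
      then have "0 \<le> \<alpha> j * \<beta> l" using a0 b0 by auto
      then show "norm ((\<alpha> j * \<beta> l) *\<^sub>R (y j - y l)) \<le> (\<alpha> j * \<beta> l) * (c + D * ((if P j then 0 else 1) + (if P l then 0 else 1)))"
        using bnd \<open>j \<in> _\<close> \<open>l \<in> _\<close> by (simp add: mult_left_mono)
    qed
    finally show ?thesis .
  qed
  also have "\<dots> = c * M * M + D * (nA * M + M * nB)"
  proof -
    have "(\<Sum>j<N. \<Sum>l<N. (\<alpha> j * \<beta> l) * (c + D * ((if P j then 0 else 1) + (if P l then 0 else 1))))
        = c * (\<Sum>j<N. \<Sum>l<N. \<alpha> j * \<beta> l) + D * ((\<Sum>j<N. \<Sum>l<N. (if P j then 0 else \<alpha> j) * \<beta> l)
             + (\<Sum>j<N. \<Sum>l<N. \<alpha> j * (if P l then 0 else \<beta> l)))"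
    proof -
      have pt: "(\<alpha> j * \<beta> l) * (c + D * ((if P j then 0 else 1) + (if P l then 0 else 1)))
          = c * (\<alpha> j * \<beta> l) + D * ((if P j then 0 else \<alpha> j) * \<beta> l + \<alpha> j * (if P l then 0 else \<beta> l))" for j l
        by (cases "P j"; cases "P l") (simp_all add: algebra_simps)
      show ?thesis by (simp only: pt sum.distrib) (simp add: sum_distrib_left[symmetric] sum.distrib)
    qed
    also have "\<dots> = c * M * M + D * (nA * M + M * nB)"
    proof -
      have p1: "(\<Sum>j<N. \<Sum>l<N. \<alpha> j * \<beta> l) = (\<Sum>j<N. \<alpha> j) * (\<Sum>j<N. \<alpha> j)"
      proof -
        have "(\<Sum>j<N. \<Sum>l<N. \<alpha> j * \<beta> l) = (\<Sum>j<N. \<alpha> j) * (\<Sum>j<N. \<beta> j)" by (simp add: sum_product)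
        then show ?thesis using eq by simp
      qed
      have p2: "(\<Sum>j<N. \<Sum>l<N. (if P j then 0 else \<alpha> j) * \<beta> l) = (\<Sum>j<N. if P j then 0 else \<alpha> j) * (\<Sum>j<N. \<alpha> j)"
      proof -
        have "(\<Sum>j<N. \<Sum>l<N. (if P j then 0 else \<alpha> j) * \<beta> l) = (\<Sum>j<N. if P j then 0 else \<alpha> j) * (\<Sum>j<N. \<beta> j)" by (simp add: sum_product)
        then show ?thesis using eq by simp
      qed
      have p3: "(\<Sum>j<N. \<Sum>l<N. \<alpha> j * (if P l then 0 else \<beta> l)) = (\<Sum>j<N. \<alpha> j) * (\<Sum>j<N. if P j then 0 else \<beta> j)"
        by (simp add: sum_product)
      show ?thesis by (simp only: p1 p2 p3 M_def nA_def nB_def mult.assoc)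
    qed
    finally show ?thesis .
  qed
  finally have ineq: "M * norm ((\<Sum>j<N. \<alpha> j *\<^sub>R y j) - (\<Sum>j<N. \<beta> j *\<^sub>R y j)) \<le> M * (c * M + D * (nA + nB))"
    by (simp add: algebra_simps)
  show ?thesis
  proof (cases "M = 0")
    case True
    then have "\<And>j. j < N \<Longrightarrow> \<alpha> j = 0" using a0 sum_nonneg_eq_0_iff[of "{..<N}" \<alpha>] unfolding M_def by auto
    moreover have "\<And>j. j < N \<Longrightarrow> \<beta> j = 0" using True eq b0 sum_nonneg_eq_0_iff[of "{..<N}" \<beta>] unfolding M_def by auto
    ultimately show ?thesis using nA0 D0 by (simp add: nA_def[symmetric] nB_def[symmetric])
  next
    case False
    then have "M > 0" using M0 by simp
    then show ?thesis using ineq unfolding M_def nA_def nB_def by (simp add: mult_le_cancel_left_pos)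
  qed
qed


context bmsB begin

definition "good t \<longleftrightarrow> (\<forall>i<N. \<forall>j<N. (close i j \<longrightarrow> dd t i j \<le> r1) \<and> (\<not> close i j \<longrightarrow> F t i j < \<kappa>))"

lemma ev_good: "eventually good sequentially"
proof -
  have "\<forall>\<^sub>F t in sequentially. (close i j \<longrightarrow> dd t i j \<le> r1) \<and> (\<not> close i j \<longrightarrow> F t i j < \<kappa>)"
    if "i < N" "j < N" for i j
  proof (cases "close i j")
    case True
    then have "\<forall>\<^sub>F t in sequentially. dd t i j < r1"
      using order_tendstoD(2)[of "\<lambda>t. dd t i j" 0 sequentially r1] r1pos by (simp add: close_def)
    then show ?thesis by (rule eventually_mono) (use True in auto)
  next
    case False
    then have "\<forall>\<^sub>F t in sequentially. F t i j < \<kappa>"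
      using order_tendstoD(2)[OF dichotomy[OF that False]] \<kappa>pos by simp
    then show ?thesis by (rule eventually_mono) (use False in auto)
  qed
  then have "\<forall>\<^sub>F t in sequentially. \<forall>i\<in>{..<N}. \<forall>j\<in>{..<N}. (close i j \<longrightarrow> dd t i j \<le> r1) \<and> (\<not> close i j \<longrightarrow> F t i j < \<kappa>)"
    by (intro eventually_ball_finite ballI) auto
  then show ?thesis unfolding good_def by (rule eventually_mono) auto
qed

lemma good_far: "good t \<Longrightarrow> i < N \<Longrightarrow> j < N \<Longrightarrow> \<not> close i j \<Longrightarrow> dd t i j > r1"
  unfolding good_def using F\<kappa> by (meson not_le not_less)

lemma good_close: "good t \<Longrightarrow> i < N \<Longrightarrow> j < N \<Longrightarrow> close i j \<Longrightarrow> \<kappa> \<le> F t i j"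
  unfolding good_def using F\<kappa> by blast

definition "sfar t = (\<Sum>i<N. \<Sum>j<N. if close i j then 0 else F t i j)"
definition "CP = {p. fst p < N \<and> snd p < N \<and> close (fst p) (snd p)}"
definition "cmax t = Max ((\<lambda>p. dd t (fst p) (snd p)) ` CP)"

lemma CP_fin: "finite CP"
  by (rule finite_subset[of _ "{..<N} \<times> {..<N}"]) (auto simp: CP_def)
lemma CP_ne: "CP \<noteq> {}"
proof -
  have "(0,0) \<in> CP" using N1 close_refl[of 0] unfolding CP_def by simp
  then show ?thesis by blast
qed

lemma cmax_ge: "i < N \<Longrightarrow> j < N \<Longrightarrow> close i j \<Longrightarrow> dd t i j \<le> cmax t"
  unfolding cmax_def using CP_fin by (intro Max_ge) (auto simp: CP_def image_iff intro!: bexI[of _ "(i,j)"])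

lemma cmax_nonneg: "0 \<le> cmax t" using cmax_ge[of 0 0 t] N1 close_refl[of 0] dd_nonneg[of t 0 0] by simp

lemma sfar_nonneg: "0 \<le> sfar t" unfolding sfar_def using F01 by (auto intro!: sum_nonneg)

lemma dd_le_2R: "i < N \<Longrightarrow> j < N \<Longrightarrow> dd t i j \<le> 2 * R"
  unfolding dd_def using X_bound[of i t] X_bound[of j t] norm_triangle_ineq4[of "X t i" "X t j"] by simp

lemma a_lower: "i < N \<Longrightarrow> j < N \<Longrightarrow> F t i j * (wmin / Wt) \<le> a t i j"
proof -
  assume i: "i < N" and j: "j < N"
  have "F t i j * (wmin / Wt) \<le> F t i j * (w j / S t i)"
    using F01[of t i j] wmin_le[OF j] S_le[of t i] S_pos[OF i, of t] wmin_pos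
    by (intro mult_left_mono frac_le) auto
  then show ?thesis by (simp add: a_def)
qed

lemma a_upper: "i < N \<Longrightarrow> j < N \<Longrightarrow> a t i j \<le> F t i j * (Wt / wmin)"
proof -
  assume i: "i < N" and j: "j < N"
  have "wmin \<le> S t i" using wmin_le[OF i] S_ge[OF i, of t] by simp
  then have "F t i j * (w j / S t i) \<le> F t i j * (Wt / wmin)"
    using F01[of t i j] Wt_ge[OF j] wmin_pos w_nonneg[OF j]
    by (intro mult_left_mono frac_le) auto
  then show ?thesis by (simp add: a_def)
qed

definition "sa t i = (\<Sum>j<N. if close i j then 0 else a t i j)"

lemma sa_le: assumes i: "i < N" shows "sa t i \<le> (Wt / wmin) * sfar t"
proof -
  have "sa t i \<le> (\<Sum>j<N. if close i j then 0 else F t i j * (Wt / wmin))"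
    unfolding sa_def using a_upper[OF i] by (intro sum_mono) auto
  also have "\<dots> = (Wt / wmin) * (\<Sum>j<N. if close i j then 0 else F t i j)"
    by (simp add: sum_distrib_left if_distrib mult.commute cong: if_cong)
  also have "\<dots> \<le> (Wt / wmin) * sfar t"
  proof (rule mult_left_mono)
    show "(\<Sum>j<N. if close i j then 0 else F t i j) \<le> sfar t"
      unfolding sfar_def using i F01 by (intro member_le_sum) (auto intro!: sum_nonneg)
  qed (use wmin_pos Wt_pos in auto)
  finally show ?thesis .
qed

definition "\<gamma> = \<kappa> * wmin / Wt"

lemma \<gamma>_pos: "\<gamma> > 0" unfolding \<gamma>_def using \<kappa>pos wmin_pos Wt_pos by simp

lemma cstep_pair:
  assumes g: "good t" and i: "i < N" and k: "k < N" and cik: "close i k"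
  shows "dd (Suc t) i k \<le> (1 - \<gamma>) * cmax t + 2 * R * (sa t i + sa t k)"
proof -
  define m where "m j = (if close i j then min (a t i j) (a t k j) else 0)" for j
  define \<alpha> where "\<alpha> j = a t i j - m j" for j
  define \<beta> where "\<beta> j = a t k j - m j" for j
  have a0: "0 \<le> \<alpha> j" if "j < N" for j unfolding \<alpha>_def m_def using a_nonneg[OF that] by auto
  have b0: "0 \<le> \<beta> j" if "j < N" for j unfolding \<beta>_def m_def using a_nonneg[OF that] by auto
  have sa: "(\<Sum>j<N. \<alpha> j) = 1 - (\<Sum>j<N. m j)" unfolding \<alpha>_def using a_sum[OF i] by (simp add: sum_subtractf)
  have sb: "(\<Sum>j<N. \<beta> j) = 1 - (\<Sum>j<N. m j)" unfolding \<beta>_def using a_sum[OF k] by (simp add: sum_subtractf)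
  have diff: "X (Suc t) i - X (Suc t) k = (\<Sum>j<N. \<alpha> j *\<^sub>R X t j) - (\<Sum>j<N. \<beta> j *\<^sub>R X t j)"
    unfolding X_Suc \<alpha>_def \<beta>_def by (simp add: scaleR_diff_left sum_subtractf)
  have "norm ((\<Sum>j<N. \<alpha> j *\<^sub>R X t j) - (\<Sum>j<N. \<beta> j *\<^sub>R X t j))
     \<le> cmax t * (\<Sum>j<N. \<alpha> j) + (2 * R) * ((\<Sum>j<N. if close i j then 0 else \<alpha> j) + (\<Sum>j<N. if close i j then 0 else \<beta> j))"
  proof (rule dob[OF a0 b0])
    show "sum \<alpha> {..<N} = sum \<beta> {..<N}" using sa sb by simp
    show "norm (X t j - X t l) \<le> cmax t" if "j < N" "l < N" "close i j" "close i l" for j l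
      using cmax_ge[OF that(1,2)] close_trans[OF close_sym[OF that(3)] that(4)] by (simp add: dd_def)
    show "norm (X t j - X t l) \<le> 2 * R" if "j < N" "l < N" for j l
      using dd_le_2R[OF that] by (simp add: dd_def)
  qed (use cmax_nonneg R_nonneg in auto)
  moreover have "cmax t * (\<Sum>j<N. \<alpha> j) \<le> (1 - \<gamma>) * cmax t"
  proof -
    have "\<gamma> \<le> m i"
    proof -
      have "\<kappa> * (wmin / Wt) \<le> a t k i"
        using good_close[OF g k i close_sym[OF cik]] a_lower[OF k i, of t] wmin_pos Wt_pos
        by (meson dual_order.trans mult_right_mono less_imp_le divide_nonneg_pos)
      moreover have "\<kappa> * (wmin / Wt) \<le> a t i i"
      proof -
        have "\<kappa> * (wmin / Wt) \<le> 1 * (wmin / Wt)"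
          using \<kappa>le1 wmin_pos Wt_pos by (intro mult_right_mono) auto
        then show ?thesis using a_lower[OF i i, of t] by (simp add: Fii)
      qed
      ultimately show ?thesis unfolding m_def \<gamma>_def using close_refl[of i] by simp
    qed
    moreover have "m i \<le> (\<Sum>j<N. m j)"
      using i by (intro member_le_sum) (auto simp: m_def intro: a_nonneg)
    ultimately have "(\<Sum>j<N. \<alpha> j) \<le> 1 - \<gamma>" using sa by simp
    then show ?thesis using cmax_nonneg[of t] by (simp add: mult.commute mult_right_mono)
  qed
  moreover have "(\<Sum>j<N. if close i j then 0 else \<alpha> j) = sa t i"
    unfolding sa_def \<alpha>_def m_def by (intro sum.cong refl) auto
  moreover have "(\<Sum>j<N. if close i j then 0 else \<beta> j) = sa t k"
    unfolding sa_def \<beta>_def m_def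
  proof (intro sum.cong refl)
    fix j show "(if close i j then 0 else a t k j - (if close i j then min (a t i j) (a t k j) else 0)) =
      (if close k j then 0 else a t k j)"
      using close_trans[OF cik] close_trans[OF close_sym[OF cik]] by auto
  qed
  ultimately show ?thesis using diff R_nonneg unfolding dd_def by simp
qed

lemma cstep:
  assumes g: "good t"
  shows "cmax (Suc t) \<le> (1 - \<gamma>) * cmax t + 4 * R * (Wt / wmin) * sfar t"
  unfolding cmax_def[of "Suc t"]
proof (subst Max_le_iff)
  show "finite ((\<lambda>p. dd (Suc t) (fst p) (snd p)) ` CP)" using CP_fin by simp
  show "(\<lambda>p. dd (Suc t) (fst p) (snd p)) ` CP \<noteq> {}" using CP_ne by simp
  show "\<forall>a\<in>(\<lambda>p. dd (Suc t) (fst p) (snd p)) ` CP. a \<le> (1 - \<gamma>) * cmax t + 4 * R * (Wt / wmin) * sfar t"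
  proof
    fix v assume "v \<in> (\<lambda>p. dd (Suc t) (fst p) (snd p)) ` CP"
    then obtain i k where ik: "i < N" "k < N" "close i k" "v = dd (Suc t) i k" by (auto simp: CP_def)
    have "2 * R * (sa t i + sa t k) \<le> 2 * R * ((Wt / wmin) * sfar t + (Wt / wmin) * sfar t)"
      using sa_le[OF ik(1)] sa_le[OF ik(2)] R_nonneg by (intro mult_left_mono add_mono) auto
    then show "v \<le> (1 - \<gamma>) * cmax t + 4 * R * (Wt / wmin) * sfar t"
      using cstep_pair[OF g ik(1,2,3)] ik(4) by (simp add: algebra_simps)
  qed
qed

end

context bmsB begin

definition "L t = (\<Sum>i<N. (w i * Sl i) * (norm (X t i))^2)"
definition "\<alpha>0 = wmin^2 * (wmin / Wt) * (wmin / Wt) * r1^2"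

lemma sq_step: assumes i: "i < N"
  shows "(norm (X (Suc t) i))^2 \<le> (\<Sum>j<N. a t i j * (norm (X t j))^2) - a t i i * (\<Sum>l<N. a t i l * (dd t i l)^2)"
proof -
  have cs: "(norm (X (Suc t) i))^2 = (\<Sum>j<N. a t i j * (norm (X t j))^2)
           - (1/2) * (\<Sum>j<N. \<Sum>l<N. a t i j * a t i l * (norm (X t j - X t l))^2)"
    unfolding X_Suc by (rule conv_sq[OF a_sum[OF i]])
  have "2 * (\<Sum>l<N. a t i i * a t i l * (norm (X t i - X t l))^2) \<le> (\<Sum>j<N. \<Sum>l<N. a t i j * a t i l * (norm (X t j - X t l))^2)"
    by (rule dsum_ge_row[OF i]) (auto intro!: mult_nonneg_nonneg a_nonneg simp: norm_minus_commute)
  moreover have "a t i i * (\<Sum>l<N. a t i l * (dd t i l)^2) = (\<Sum>l<N. a t i i * a t i l * (norm (X t i - X t l))^2)"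
    by (simp add: dd_def sum_distrib_left mult_ac)
  ultimately have "a t i i * (\<Sum>l<N. a t i l * (dd t i l)^2) \<le> (1/2) * (\<Sum>j<N. \<Sum>l<N. a t i j * a t i l * (norm (X t j - X t l))^2)"
    by linarith
  then show ?thesis using cs by simp
qed

lemma omega_ge: "i < N \<Longrightarrow> wmin^2 \<le> w i * Sl i"
proof -
  assume i: "i < N"
  have "wmin * wmin \<le> w i * Sl i"
    using wmin_le[OF i] Sl_ge[OF i] wmin_pos by (intro mult_mono) auto
  then show ?thesis by (simp add: power2_eq_square)
qed

lemma omega_nonneg: "i < N \<Longrightarrow> 0 \<le> w i * Sl i"
  using omega_ge[of i] by (meson order.trans zero_le_power2)

lemma L_nonneg: "0 \<le> L t" unfolding L_def
  by (rule sum_nonneg, rule mult_nonneg_nonneg[OF omega_nonneg]) auto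

lemma part_c: "(\<Sum>i<N. (w i * Sl i) * (\<Sum>j<N. a t i j * (norm (X t j))^2))
    = L t + (\<Sum>i<N. \<Sum>j<N. (rho t i - 1) * B t i j * ((norm (X t j))^2 - (norm (X t i))^2))"
proof -
  let ?g = "\<lambda>j. (norm (X t j))^2"
  have 1: "(w i * Sl i) * (\<Sum>j<N. a t i j * ?g j) = (w i * Sl i) * ?g i + (\<Sum>j<N. rho t i * B t i j * (?g j - ?g i))"
    if i: "i < N" for i
  proof -
    have "(\<Sum>j<N. a t i j * ?g j) = ?g i + (\<Sum>j<N. a t i j * (?g j - ?g i))"
      using a_sum[OF i] by (simp add: right_diff_distrib sum_subtractf sum_distrib_right[symmetric])
    moreover have "(w i * Sl i) * a t i j = rho t i * B t i j" for j
      using S_pos[OF i, of t] unfolding a_def rho_def B_def by (simp add: field_simps)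
    ultimately show ?thesis by (simp add: distrib_left sum_distrib_left mult.assoc[symmetric])
  qed
  have 2: "(\<Sum>i<N. \<Sum>j<N. B t i j * (?g j - ?g i)) = 0"
  proof -
    have "(\<Sum>i<N. \<Sum>j<N. B t i j * ?g j) = (\<Sum>i<N. \<Sum>j<N. B t i j * ?g i)"
      by (subst sum.swap) (simp add: B_sym)
    then show ?thesis by (simp add: right_diff_distrib sum_subtractf)
  qed
  have "(\<Sum>i<N. (w i * Sl i) * (\<Sum>j<N. a t i j * ?g j))
      = L t + (\<Sum>i<N. \<Sum>j<N. rho t i * B t i j * (?g j - ?g i))"
    unfolding L_def by (simp add: 1 sum.distrib)
  also have "(\<Sum>i<N. \<Sum>j<N. rho t i * B t i j * (?g j - ?g i))
      = (\<Sum>i<N. \<Sum>j<N. (rho t i - 1) * B t i j * (?g j - ?g i)) + (\<Sum>i<N. \<Sum>j<N. B t i j * (?g j - ?g i))"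
    by (simp add: sum.distrib[symmetric] algebra_simps)
  finally show ?thesis using 2 by simp
qed

lemma g_diff: "i < N \<Longrightarrow> j < N \<Longrightarrow> \<bar>(norm (X t j))^2 - (norm (X t i))^2\<bar> \<le> 2 * R * dd t i j"
proof -
  assume i: "i < N" and j: "j < N"
  have "\<bar>(norm (X t j))^2 - (norm (X t i))^2\<bar> = \<bar>norm (X t j) - norm (X t i)\<bar> * (norm (X t j) + norm (X t i))"
  proof -
    have "(norm (X t j))^2 - (norm (X t i))^2 = (norm (X t j) - norm (X t i)) * (norm (X t j) + norm (X t i))"
      by (simp add: power2_eq_square algebra_simps)
    then show ?thesis by (simp add: abs_mult)
  qed
  also have "\<dots> \<le> dd t i j * (2 * R)"
  proof (rule mult_mono)
    show "\<bar>norm (X t j) - norm (X t i)\<bar> \<le> dd t i j"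
      using norm_triangle_ineq3[of "X t j" "X t i"] by (simp add: dd_def norm_minus_commute)
    show "norm (X t j) + norm (X t i) \<le> 2 * R" using X_bound[OF i, of t] X_bound[OF j, of t] by simp
  qed (auto simp: dd_nonneg)
  finally show ?thesis by (simp add: mult_ac)
qed

lemma part_d: "(\<Sum>i<N. \<Sum>j<N. (rho t i - 1) * B t i j * ((norm (X t j))^2 - (norm (X t i))^2))
   \<le> theta t * (2 * R) * (\<Sum>i<N. \<Sum>j<N. B t i j * dd t i j)"
proof -
  have "(\<Sum>i<N. \<Sum>j<N. (rho t i - 1) * B t i j * ((norm (X t j))^2 - (norm (X t i))^2))
      \<le> (\<Sum>i<N. \<Sum>j<N. theta t * (2 * R) * (B t i j * dd t i j))"
  proof (intro sum_mono)
    fix i j assume i: "i \<in> {..<N}" and j: "j \<in> {..<N}"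
    have B0: "0 \<le> B t i j" using B_nonneg i j by auto
    have "(rho t i - 1) * B t i j * ((norm (X t j))^2 - (norm (X t i))^2)
        \<le> \<bar>(rho t i - 1) * B t i j * ((norm (X t j))^2 - (norm (X t i))^2)\<bar>" by (rule abs_ge_self)
    also have "\<dots> = \<bar>rho t i - 1\<bar> * B t i j * \<bar>(norm (X t j))^2 - (norm (X t i))^2\<bar>"
      using B0 by (simp add: abs_mult)
    also have "\<dots> \<le> theta t * B t i j * (2 * R * dd t i j)"
    proof (rule mult_mono)
      show "\<bar>rho t i - 1\<bar> * B t i j \<le> theta t * B t i j"
        using theta_ge[of i t] i B0 by (intro mult_right_mono) auto
      show "\<bar>(norm (X t j))^2 - (norm (X t i))^2\<bar> \<le> 2 * R * dd t i j" using g_diff[of i j t] i j by auto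
      show "0 \<le> theta t * B t i j" using B0 by (auto simp: theta_def intro!: sum_nonneg mult_nonneg_nonneg)
    qed simp
    finally show "(rho t i - 1) * B t i j * ((norm (X t j))^2 - (norm (X t i))^2) \<le> theta t * (2 * R) * (B t i j * dd t i j)"
      by (simp add: mult_ac)
  qed
  also have "\<dots> = theta t * (2 * R) * (\<Sum>i<N. \<Sum>j<N. B t i j * dd t i j)"
    by (simp add: sum_distrib_left)
  finally show ?thesis .
qed

lemma part_e: "(\<Sum>i<N. \<Sum>j<N. B t i j * dd t i j) \<le> Wt * Wt * (real N * real N * cmax t + 2 * R * sfar t)"
proof -
  have "(\<Sum>i<N. \<Sum>j<N. B t i j * dd t i j) \<le> (\<Sum>i<N. \<Sum>j<N. Wt * Wt * (cmax t + 2 * R * (if close i j then 0 else F t i j)))"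
  proof (intro sum_mono)
    fix i j assume i: "i \<in> {..<N}" and j: "j \<in> {..<N}"
    have ww: "w i * w j \<le> Wt * Wt" using Wt_ge[of i] Wt_ge[of j] i j w_nonneg Wt_pos by (intro mult_mono) auto

    have B: "B t i j \<le> Wt * Wt * F t i j" unfolding B_def using ww F01 by (intro mult_right_mono) auto
    have WW: "0 \<le> Wt * Wt" by simp
    show "B t i j * dd t i j \<le> Wt * Wt * (cmax t + 2 * R * (if close i j then 0 else F t i j))"
    proof (cases "close i j")
      case True
      have BW: "B t i j \<le> Wt * Wt" using B F01[of t i j] WW mult_left_le[of "F t i j" "Wt * Wt"] by linarith
      have "B t i j * dd t i j \<le> (Wt * Wt) * cmax t"
        using BW cmax_ge[of i j t] True i j dd_nonneg[of t i j] WW by (intro mult_mono) auto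
      then show ?thesis using True by simp
    next
      case False
      have "B t i j * dd t i j \<le> (Wt * Wt * F t i j) * (2 * R)"
        using B dd_le_2R[of i j t] i j dd_nonneg[of t i j] F01[of t i j] WW
        by (intro mult_mono) auto
      moreover have "0 \<le> Wt * Wt * cmax t" using cmax_nonneg[of t] WW by simp
      moreover have "Wt * Wt * (cmax t + 2 * R * F t i j) = Wt * Wt * cmax t + (Wt * Wt * F t i j) * (2 * R)"
        by (simp add: algebra_simps)
      ultimately show ?thesis using False by simp
    qed
  qed
  also have "\<dots> = Wt * Wt * (real N * real N * cmax t + 2 * R * sfar t)"
    unfolding sfar_def by (simp add: sum.distrib sum_distrib_left algebra_simps)
  finally show ?thesis .
qed

lemma part_f: assumes g: "good t"
  shows "\<alpha>0 * sfar t \<le> (\<Sum>i<N. (w i * Sl i) * (a t i i * (\<Sum>l<N. a t i l * (dd t i l)^2)))"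
proof -
  have "\<alpha>0 * sfar t = (\<Sum>i<N. \<Sum>l<N. \<alpha>0 * (if close i l then 0 else F t i l))"
    unfolding sfar_def by (simp add: sum_distrib_left)
  also have "\<dots> \<le> (\<Sum>i<N. \<Sum>l<N. (w i * Sl i) * a t i i * (a t i l * (dd t i l)^2))"
  proof (intro sum_mono)
    fix i l assume i: "i \<in> {..<N}" and l: "l \<in> {..<N}"
    show "\<alpha>0 * (if close i l then 0 else F t i l) \<le> (w i * Sl i) * a t i i * (a t i l * (dd t i l)^2)"
    proof (cases "close i l")
      case True
      then show ?thesis using i l omega_nonneg[of i] a_nonneg[of i t i] a_nonneg[of l t i]
        by (simp add: mult_nonneg_nonneg)
    next
      case False
      have d: "r1^2 \<le> (dd t i l)^2" using good_far[OF g _ _ False] i l r1pos by (intro power_mono) auto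
      have aii: "wmin / Wt \<le> a t i i" using a_lower[of i i t] i by (simp add: Fii)
      have ail: "F t i l * (wmin / Wt) \<le> a t i l" using a_lower[of i l t] i l by simp
      have p: "0 \<le> wmin / Wt" using wmin_pos Wt_pos by simp
      have "\<alpha>0 * F t i l = wmin^2 * (wmin / Wt) * (F t i l * (wmin / Wt) * r1^2)"
        unfolding \<alpha>0_def by (simp add: mult_ac)
      also have "\<dots> \<le> (w i * Sl i) * a t i i * (a t i l * (dd t i l)^2)"
      proof (rule mult_mono)
        show "wmin^2 * (wmin / Wt) \<le> (w i * Sl i) * a t i i"
          using omega_ge[of i] aii i p omega_nonneg[of i] by (intro mult_mono) auto
        show "F t i l * (wmin / Wt) * r1^2 \<le> a t i l * (dd t i l)^2"
          using ail d p F01[of t i l] a_nonneg[of l t i] l by (intro mult_mono) auto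
        show "0 \<le> (w i * Sl i) * a t i i" using omega_nonneg[of i] a_nonneg[of i t i] i by simp
        show "0 \<le> F t i l * (wmin / Wt) * r1^2" using p F01[of t i l] by (intro mult_nonneg_nonneg) auto

      qed

      finally show ?thesis using False by simp
    qed
  qed
  also have "\<dots> = (\<Sum>i<N. (w i * Sl i) * (a t i i * (\<Sum>l<N. a t i l * (dd t i l)^2)))"
    by (simp add: sum_distrib_left mult_ac)
  finally show ?thesis .
qed

lemma Lstep: assumes g: "good t"
  shows "L (Suc t) \<le> L t - \<alpha>0 * sfar t + theta t * (2 * R) * (Wt * Wt * (real N * real N * cmax t + 2 * R * sfar t))"
proof -
  have "L (Suc t) \<le> (\<Sum>i<N. (w i * Sl i) * ((\<Sum>j<N. a t i j * (norm (X t j))^2) - a t i i * (\<Sum>l<N. a t i l * (dd t i l)^2)))"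
    unfolding L_def by (intro sum_mono mult_left_mono sq_step omega_nonneg) auto
  also have "\<dots> = (\<Sum>i<N. (w i * Sl i) * (\<Sum>j<N. a t i j * (norm (X t j))^2))
                 - (\<Sum>i<N. (w i * Sl i) * (a t i i * (\<Sum>l<N. a t i l * (dd t i l)^2)))"
    by (simp add: right_diff_distrib sum_subtractf)
  also have "\<dots> \<le> L t + theta t * (2 * R) * (\<Sum>i<N. \<Sum>j<N. B t i j * dd t i j) - \<alpha>0 * sfar t"
    using part_c[of t] part_d[of t] part_f[OF g] by linarith
  also have "\<dots> \<le> L t + theta t * (2 * R) * (Wt * Wt * (real N * real N * cmax t + 2 * R * sfar t)) - \<alpha>0 * sfar t"
  proof -
    have "0 \<le> theta t * (2 * R)" using R_nonneg by (auto simp: theta_def intro!: sum_nonneg mult_nonneg_nonneg)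
    then show ?thesis using part_e[of t] by (simp add: mult_left_mono)
  qed
  finally show ?thesis by simp
qed

end

context bmsB begin

lemma \<alpha>0_pos: "\<alpha>0 > 0" unfolding \<alpha>0_def using wmin_pos Wt_pos r1pos by simp

lemma theta_nonneg: "0 \<le> theta t" unfolding theta_def by (auto intro!: sum_nonneg)

lemma Z_bound: assumes g: "good t" and i: "i < N"
  shows "norm (Z t i) \<le> cmax t + 2 * R * (Wt / wmin) * sfar t"
proof -
  have Zeq: "Z t i = (\<Sum>j<N. a t i j *\<^sub>R (X t i - X t j))"
    unfolding Z_def X_Suc using a_sum[OF i]
    by (simp add: scaleR_diff_right sum_subtractf scaleR_sum_left[symmetric])
  have "norm (Z t i) \<le> (\<Sum>j<N. norm (a t i j *\<^sub>R (X t i - X t j)))" unfolding Zeq by (rule norm_sum)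

  also have "\<dots> \<le> (\<Sum>j<N. a t i j * cmax t + 2 * R * (if close i j then 0 else a t i j))"
  proof (intro sum_mono)
    fix j assume j: "j \<in> {..<N}"
    have a0: "0 \<le> a t i j" using a_nonneg j by auto
    have "norm (a t i j *\<^sub>R (X t i - X t j)) = a t i j * dd t i j" using a0 by (simp add: dd_def)
    also have "\<dots> \<le> a t i j * cmax t + 2 * R * (if close i j then 0 else a t i j)"
    proof (cases "close i j")
      case True
      then show ?thesis using cmax_ge[of i j t] i j a0 by (simp add: mult_left_mono)
    next
      case False
      have "a t i j * dd t i j \<le> a t i j * (2 * R)" using dd_le_2R[of i j t] i j a0 by (simp add: mult_left_mono)
      moreover have "0 \<le> a t i j * cmax t" using a0 cmax_nonneg[of t] by simp
      ultimately show ?thesis using False by (simp add: algebra_simps)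
    qed
    finally show "norm (a t i j *\<^sub>R (X t i - X t j)) \<le> a t i j * cmax t + 2 * R * (if close i j then 0 else a t i j)" .
  qed
  also have "\<dots> = cmax t + 2 * R * sa t i"
    using a_sum[OF i] unfolding sa_def by (simp add: sum.distrib sum_distrib_left[symmetric] sum_distrib_right[symmetric])
  also have "\<dots> \<le> cmax t + 2 * R * ((Wt / wmin) * sfar t)"
    using sa_le[OF i, of t] R_nonneg by (intro add_left_mono mult_left_mono) auto

  finally show ?thesis by (simp add: mult_ac)
qed

definition "K1 = 2 * R * (Wt * Wt)"
definition "K2 = 4 * R * (Wt / wmin)"
definition "\<theta>0 = \<alpha>0 / (2 * (K1 * (real N * real N * K2 / \<gamma> + 2 * R) + 1))"

lemma K_nonneg: "0 \<le> K1" "0 \<le> K2" unfolding K1_def K2_def using R_nonneg wmin_pos Wt_pos by auto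

lemma \<theta>0_props: "\<theta>0 > 0" "\<theta>0 * (K1 * (real N * real N * K2 / \<gamma> + 2 * R)) \<le> \<alpha>0 / 2"
proof -
  define Q where "Q = K1 * (real N * real N * K2 / \<gamma> + 2 * R)"
  have Q0: "0 \<le> Q" unfolding Q_def using K_nonneg R_nonneg \<gamma>_pos by auto
  show "\<theta>0 > 0" unfolding \<theta>0_def using \<alpha>0_pos Q0 Q_def by simp
  have "\<theta>0 * Q = \<alpha>0 / 2 * (Q / (Q + 1))" unfolding \<theta>0_def Q_def[symmetric] using Q0 by (simp add: field_simps)
  also have "\<dots> \<le> \<alpha>0 / 2 * 1" using Q0 \<alpha>0_pos by (intro mult_left_mono) auto
  finally show "\<theta>0 * (K1 * (real N * real N * K2 / \<gamma> + 2 * R)) \<le> \<alpha>0 / 2" by (simp add: Q_def)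
qed

lemma summable_main: "summable sfar \<and> summable cmax"
proof -
  have "\<forall>\<^sub>F t in sequentially. theta t < \<theta>0" using order_tendstoD(2)[OF theta_lim \<theta>0_props(1)] .
  then have "\<forall>\<^sub>F t in sequentially. good t \<and> theta t < \<theta>0" using eventually_conj[OF ev_good] by blast
  then obtain T0 where T0': "\<forall>t\<ge>T0. good t \<and> theta t < \<theta>0" unfolding eventually_sequentially by blast
  have T0: "\<And>t. t \<ge> T0 \<Longrightarrow> good t \<and> theta t < \<theta>0" using T0' by blast

  define c where "c k = cmax (T0 + k)" for k
  define s where "s k = sfar (T0 + k)" for k
  have c0: "0 \<le> c k" for k unfolding c_def by (rule cmax_nonneg)
  have s0: "0 \<le> s k" for k unfolding s_def by (rule sfar_nonneg)
  have A: "\<gamma> * (\<Sum>k<n. c k) + c n \<le> c 0 + K2 * (\<Sum>k<n. s k)" for n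
  proof (induction n)
    case (Suc n)
    have "c (Suc n) \<le> (1 - \<gamma>) * c n + K2 * s n"
      using cstep[of "T0 + n"] T0[of "T0 + n"] unfolding c_def s_def K2_def by (simp add: mult_ac)
    then show ?case using Suc by (simp add: algebra_simps)
  qed simp
  have B: "L (T0 + n) + \<alpha>0 * (\<Sum>k<n. s k) \<le> L T0 + \<theta>0 * K1 * (real N * real N * (\<Sum>k<n. c k) + 2 * R * (\<Sum>k<n. s k))" for n
  proof (induction n)
    case (Suc n)
    have g: "good (T0 + n)" and th: "theta (T0 + n) < \<theta>0" using T0[of "T0 + n"] by auto
    have "L (Suc (T0 + n)) \<le> L (T0 + n) - \<alpha>0 * s n + theta (T0 + n) * (2 * R) * (Wt * Wt * (real N * real N * c n + 2 * R * s n))"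
      using Lstep[OF g] unfolding c_def s_def .
    also have "theta (T0 + n) * (2 * R) * (Wt * Wt * (real N * real N * c n + 2 * R * s n))
        \<le> \<theta>0 * K1 * (real N * real N * c n + 2 * R * s n)"
    proof -
      have "0 \<le> K1 * (real N * real N * c n + 2 * R * s n)"
        using K_nonneg c0 s0 R_nonneg by (auto intro!: mult_nonneg_nonneg add_nonneg_nonneg)
      then have "theta (T0 + n) * (K1 * (real N * real N * c n + 2 * R * s n)) \<le> \<theta>0 * (K1 * (real N * real N * c n + 2 * R * s n))"
        using th by (intro mult_right_mono) auto
      then show ?thesis unfolding K1_def by (simp add: mult_ac)
    qed
    finally have "L (Suc (T0 + n)) \<le> L (T0 + n) - \<alpha>0 * s n + \<theta>0 * K1 * (real N * real N * c n + 2 * R * s n)" by simp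
    then show ?case using Suc by (simp add: algebra_simps)
  qed simp
  have boundS: "(\<Sum>k<n. s k) \<le> 2 * (L T0 + \<theta>0 * K1 * real N * real N * c 0 / \<gamma>) / \<alpha>0" for n
  proof -
    define Cs where "Cs = (\<Sum>k<n. c k)"
    define Ss where "Ss = (\<Sum>k<n. s k)"
    have Ss0: "0 \<le> Ss" unfolding Ss_def using s0 by (auto intro: sum_nonneg)
    have Cs: "Cs \<le> (c 0 + K2 * Ss) / \<gamma>" using A[of n] c0[of n] \<gamma>_pos unfolding Cs_def Ss_def
      by (simp add: field_simps)
    have B': "\<alpha>0 * Ss \<le> L T0 + \<theta>0 * K1 * (real N * real N * Cs + 2 * R * Ss)"
      using B[of n] L_nonneg[of "T0 + n"] unfolding Cs_def Ss_def by linarith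
    have th: "0 \<le> \<theta>0 * K1" using \<theta>0_props(1) K_nonneg by simp
    have "\<theta>0 * K1 * (real N * real N * Cs) \<le> \<theta>0 * K1 * (real N * real N * ((c 0 + K2 * Ss) / \<gamma>))"
      using Cs th by (intro mult_left_mono) auto
    moreover have "\<theta>0 * K1 * (real N * real N * ((c 0 + K2 * Ss) / \<gamma>))
        = \<theta>0 * K1 * real N * real N * c 0 / \<gamma> + \<theta>0 * (K1 * (real N * real N * K2 / \<gamma>)) * Ss"
      using \<gamma>_pos by (simp add: field_simps)
    moreover have "\<theta>0 * K1 * (real N * real N * Cs + 2 * R * Ss) = \<theta>0 * K1 * (real N * real N * Cs) + \<theta>0 * (K1 * (2 * R)) * Ss"
      by (simp add: algebra_simps)
    moreover have "\<theta>0 * (K1 * (real N * real N * K2 / \<gamma> + 2 * R)) * Ss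
        = \<theta>0 * (K1 * (real N * real N * K2 / \<gamma>)) * Ss + \<theta>0 * (K1 * (2 * R)) * Ss"
      by (simp add: algebra_simps)
    ultimately have "\<alpha>0 * Ss \<le> L T0 + \<theta>0 * K1 * real N * real N * c 0 / \<gamma> + \<theta>0 * (K1 * (real N * real N * K2 / \<gamma> + 2 * R)) * Ss"
      using B' by linarith
    moreover have "\<theta>0 * (K1 * (real N * real N * K2 / \<gamma> + 2 * R)) * Ss \<le> \<alpha>0 / 2 * Ss"
      using \<theta>0_props(2) Ss0 by (intro mult_right_mono) auto
    ultimately have "\<alpha>0 / 2 * Ss \<le> L T0 + \<theta>0 * K1 * real N * real N * c 0 / \<gamma>" by linarith

    then show ?thesis using \<alpha>0_pos unfolding Ss_def by (simp add: field_simps)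
  qed
  have sumS: "summable s" by (rule summableI_nonneg_bounded[OF s0 boundS])
  have sumC: "summable c"
  proof (rule summableI_nonneg_bounded[OF c0])
    fix n
    have "K2 * (\<Sum>k<n. s k) \<le> K2 * (2 * (L T0 + \<theta>0 * K1 * real N * real N * c 0 / \<gamma>) / \<alpha>0)"
      using boundS[of n] K_nonneg by (intro mult_left_mono) auto
    then have "\<gamma> * (\<Sum>k<n. c k) \<le> c 0 + K2 * (2 * (L T0 + \<theta>0 * K1 * real N * real N * c 0 / \<gamma>) / \<alpha>0)"
      using A[of n] c0[of n] by linarith

    then show "(\<Sum>k<n. c k) \<le> (c 0 + K2 * (2 * (L T0 + \<theta>0 * K1 * real N * real N * c 0 / \<gamma>) / \<alpha>0)) / \<gamma>"
      using \<gamma>_pos by (simp add: field_simps)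
  qed
  have "summable sfar" using sumS unfolding s_def by (subst summable_iff_shift[symmetric, of _ T0]) (simp add: add.commute)
  moreover have "summable cmax" using sumC unfolding c_def by (subst summable_iff_shift[symmetric, of _ T0]) (simp add: add.commute)
  ultimately show ?thesis by simp
qed

lemma X_conv: assumes i: "i < N" shows "convergent (\<lambda>t. X t i)"
proof -
  have sn: "summable (\<lambda>t. norm (Z t i))"
  proof (rule summable_comparison_test_ev)
    show "\<forall>\<^sub>F t in sequentially. norm (norm (Z t i)) \<le> cmax t + 2 * R * (Wt / wmin) * sfar t"
      using ev_good by eventually_elim (use Z_bound i in auto)
    show "summable (\<lambda>t. cmax t + 2 * R * (Wt / wmin) * sfar t)"
      using summable_main by (intro summable_add summable_mult) auto
  qed
  then have sz: "summable (\<lambda>t. Z t i)" by (rule summable_norm_cancel)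
  have Xeq: "X t i = X 0 i - (\<Sum>k<t. Z k i)" for t
    by (induction t) (auto simp: Z_def)
  have "(\<lambda>t. X 0 i - (\<Sum>k<t. Z k i)) \<longlonglongrightarrow> X 0 i - suminf (\<lambda>k. Z k i)"
    by (intro tendsto_intros summable_LIMSEQ sz)
  then show ?thesis unfolding Xeq[symmetric] convergent_def by blast
qed

end

theorem theorem1:
  fixes f :: "real^'p \<Rightarrow> real" and w :: "nat \<Rightarrow> real"
    and x :: "nat \<Rightarrow> real^'p" and N :: nat
  assumes "N \<ge> 1"
    and "\<And>j. j < N \<Longrightarrow> w j > 0"
    and "PDD f"
  shows "\<exists>xs :: nat \<Rightarrow> real^'p. \<forall>i<N. (\<lambda>t. bms f w N x t i) \<longlonglongrightarrow> xs i"
proof -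
  obtain \<phi> :: "real \<Rightarrow> real" where
    f01: "\<And>u. 0 \<le> f u \<and> f u \<le> 1" and f1: "\<And>u. f u = 1 \<longleftrightarrow> u = 0"
    and f\<phi>: "\<And>u. f u = \<phi> (norm u)" and mono: "\<And>a b. 0 \<le> a \<Longrightarrow> a \<le> b \<Longrightarrow> \<phi> b \<le> \<phi> a"
    using assms(3) unfolding PDD_def by blast
  interpret bmsl f w N x \<phi>
    by unfold_locales (use assms(1,2) f01 f1 f\<phi> mono in auto)
  show ?thesis
  proof (cases "\<forall>u. u \<noteq> 0 \<longrightarrow> f u = 0")
    case True
    have "\<forall>i<N. (\<lambda>t. bms f w N x t i) \<longlonglongrightarrow> x i"
    proof (intro allI impI)
      fix i assume i: "i < N"
      have A: "\<And>u. u \<noteq> 0 \<Longrightarrow> f u = 0" using True by blast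
      have "(\<lambda>t. X t i) = (\<lambda>t. x i)" using caseA[OF A i] by (rule ext)
      then show "(\<lambda>t. bms f w N x t i) \<longlonglongrightarrow> x i" by (simp add: X_def[abs_def])
    qed

    then show ?thesis by blast
  next
    case False
    then obtain u0 where u0: "u0 \<noteq> 0" "f u0 \<noteq> 0" by blast
    have fpos: "f u0 > 0" using f01[of u0] u0 by simp
    interpret bmsB f w N x \<phi> "norm u0" "f u0"
    proof unfold_locales
      show "0 < norm u0" using u0 by simp
      show "0 < f u0" by (rule fpos)
      fix u :: "real^'p" assume "norm u \<le> norm u0"
      then show "f u0 \<le> f u" unfolding f\<phi> by (intro mono) auto
    qed
    have "\<forall>i<N. (\<lambda>t. bms f w N x t i) \<longlonglongrightarrow> lim (\<lambda>t. X t i)"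
    proof (intro allI impI)
      fix i assume i: "i < N"
      have "(\<lambda>t. X t i) \<longlonglongrightarrow> lim (\<lambda>t. X t i)" using X_conv[OF i] by (simp only: convergent_LIMSEQ_iff)
      then show "(\<lambda>t. bms f w N x t i) \<longlonglongrightarrow> lim (\<lambda>t. X t i)" by (simp only: X_def)
    qed

    then show ?thesis by (intro exI[of _ "\<lambda>i. lim (\<lambda>t. X t i)"])
  qed
qed


end
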